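(* ($\mathbf{RCA_0}$) Let $T$ be a coded prae-dilator. Then the order $\vartheta(T)$ can be embedded into any Bachmann–Howard fixed point of $T$: whenever $(X,<_X)$ is a linear order with $X\subseteq\mathbb N$ and $\vartheta:D^T_X\to X$ is a Bachmann–Howard collapse, there is an order embedding $f:\vartheta(T)\to X$.
   Context: Conventions. Each natural number $n$ is identified with the linear order $\{0,\dots,n-1\}$; the category of natural numbers has these as objects and strictly increasing maps as morphisms. For a finite linear order $a$ write $|a|$ for its cardinality and $\operatorname{en}_a:|a|\to a$ for the unique order isomorphism; for an order embedding $f:a\to b$ of finite linear orders, $|f|:|a|\to|b|$ is the unique strictly increasing map with $\operatorname{en}_b\circ|f|=f\circ\operatorname{en}_a$. For $c\subseteq d$, $\iota_c^d$ is the inclusion. $[X]^{<\omega}$ is the set of finite subsets of $X$, $[f]^{<\omega}(a)=\{f(s)\mid s\in a\}$. For a linear order $X$, $a\in[X]^{<\omega}$, $x\in X$: $a<^{\mathrm{fin}}_X x$ means $s<_Xx$ for all $s\in a$. A coded prae-dilator (represented by sets of natural numbers coding the orders $T_n$, the maps $T_f$ and the supports) consists of a functor $T$ from the category of natural numbers to linear orders with fields in $\mathbb N$, and a natural transformation $\operatorname{supp}^T:T\Rightarrow[\cdot]^{<\omega}$ ($\operatorname{supp}^T_m\circ T_f=[f]^{<\omega}\circ\operatorname{supp}^T_n$ for $f:n\to m$) such that every $\sigma\in T_n$ lies in the range of $T_{\iota\circ\operatorname{en}}$, with $\operatorname{en}=\operatorname{en}_{\operatorname{supp}^T_n(\sigma)}$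 and $\iota$ the inclusion of $\operatorname{supp}^T_n(\sigma)$ into $n$. For a linear order $(X,<_X)$ with $X\subseteq\mathbb N$: $D^T_X=\{\langle a,\sigma\rangle\mid a\in[X]^{<\omega},\ \sigma\in T_{|a|},\ \operatorname{supp}^T_{|a|}(\sigma)=|a|\}$ ordered by $\langle a,\sigma\rangle<_{D^T_X}\langle b,\tau\rangle$ iff $T_{|\iota_a^{a\cup b}|}(\sigma)<_{T_{|a\cup b|}}T_{|\iota_b^{a\cup b}|}(\tau)$, with $\operatorname{supp}^{D^T}_X(\langle a,\sigma\rangle)=a$. A Bachmann–Howard collapse is a function $\vartheta:D^T_X\to X$ such that for all $\rho,\pi\in D^T_X$: (a) if $\rho<_{D^T_X}\pi$ and $\operatorname{supp}^{D^T}_X(\rho)<^{\mathrm{fin}}_X\vartheta(\pi)$ then $\vartheta(\rho)<_X\vartheta(\pi)$; (b) $\operatorname{supp}^{D^T}_X(\rho)<^{\mathrm{fin}}_X\vartheta(\rho)$. A linear order admitting such a collapse is a Bachmann–Howard fixed point of $T$. The order $\vartheta(T)$ (terms coded by natural numbers): defined by simultaneous recursion; whenever $s_0<_{\vartheta(T)}\dots<_{\vartheta(T)}s_{n-1}$ are in $\vartheta(T)$ ($n\geq0$) and $\sigma\in T_n$ with $\operatorname{supp}^T_n(\sigma)=n$, the term $\vartheta_\sigma^{s_0,\dots,s_{n-1}}$ is in $\vartheta(T)$. For $s=\vartheta_\sigma^{s_0,\dots,s_{n-1}}$, $t=\vartheta_\tau^{t_0,\dots,t_{m-1}}$: $s<_{\vartheta(T)}t$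 iff (i') there are strictly increasing $f:n\to k$, $g:m\to k$, $k=|\{s_0,\dots,s_{n-1},t_0,\dots,t_{m-1}\}|$, with $f(i)<g(j)\Leftrightarrow s_i<_{\vartheta(T)}t_j$ and $g(j)<f(i)\Leftrightarrow t_j<_{\vartheta(T)}s_i$, such that $T_f(\sigma)<_{T_k}T_g(\tau)$, and moreover $n=0$ or $s_{n-1}<_{\vartheta(T)}t$; or (ii') $m>0$ and $s\leq_{\vartheta(T)}t_{m-1}$. *)

theory Defs
  imports Main
begin

definition linord_on :: "'a set \<Rightarrow> ('a \<Rightarrow> 'a \<Rightarrow> bool) \<Rightarrow> bool" where
  "linord_on X lt \<longleftrightarrow>
     (\<forall>x\<in>X. \<not> lt x x) \<and>
     (\<forall>x\<in>X. \<forall>y\<in>X. \<forall>z\<in>X. lt x y \<longrightarrow> lt y z \<longrightarrow> lt x z) \<and>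
     (\<forall>x\<in>X. \<forall>y\<in>X. x = y \<or> lt x y \<or> lt y x)"

definition rk :: "('a \<Rightarrow> 'a \<Rightarrow> bool) \<Rightarrow> 'a set \<Rightarrow> 'a \<Rightarrow> nat" where
  "rk lt c x = card {y \<in> c. lt y x}"

definition en :: "('a \<Rightarrow> 'a \<Rightarrow> bool) \<Rightarrow> 'a set \<Rightarrow> nat \<Rightarrow> 'a" where
  "en lt a i = (THE x. x \<in> a \<and> rk lt a x = i)"

text \<open>|iota_a^c| : |a| \<rightarrow> |c| for a \<subseteq> c, i.e. en_c^{-1} \<circ> iota \<circ> en_a\<close>
definition collapse_incl :: "('a \<Rightarrow> 'a \<Rightarrow> bool) \<Rightarrow> 'a set \<Rightarrow> 'a set \<Rightarrow> nat \<Rightarrow> nat" where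
  "collapse_incl lt a c = (\<lambda>i. rk lt c (en lt a i))"

text \<open>Morphisms of the category of natural numbers: strictly increasing maps n \<rightarrow> m,
  represented by functions nat \<Rightarrow> nat (only the values below n matter).\<close>
definition incr :: "nat \<Rightarrow> nat \<Rightarrow> (nat \<Rightarrow> nat) \<Rightarrow> bool" where
  "incr n m f \<longleftrightarrow> (\<forall>i<n. f i < m) \<and> (\<forall>i j. i < j \<longrightarrow> j < n \<longrightarrow> f i < f j)"

record praedil =
  fld  :: "nat \<Rightarrow> nat set"
  tlt  :: "nat \<Rightarrow> nat \<Rightarrow> nat \<Rightarrow> bool"
  mor  :: "nat \<Rightarrow> nat \<Rightarrow> (nat \<Rightarrow> nat) \<Rightarrow> nat \<Rightarrow> nat"  \<comment> \<open>T_f for f : n \<rightarrow> m\<close>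
  supp :: "nat \<Rightarrow> nat \<Rightarrow> nat set"

definition prae_dilator :: "praedil \<Rightarrow> bool" where
  "prae_dilator T \<longleftrightarrow>
     \<comment> \<open>each T_n is a linear order\<close>
     (\<forall>n. linord_on (fld T n) (tlt T n)) \<and>
     \<comment> \<open>T_f is an order embedding T_n \<rightarrow> T_m\<close>
     (\<forall>n m f. incr n m f \<longrightarrow>
        (\<forall>\<sigma>\<in>fld T n. mor T n m f \<sigma> \<in> fld T m) \<and>
        (\<forall>\<sigma>\<in>fld T n. \<forall>\<tau>\<in>fld T n. tlt T n \<sigma> \<tau> \<longrightarrow> tlt T m (mor T n m f \<sigma>) (mor T n m f \<tau>))) \<and>
     \<comment> \<open>T_f depends only on the morphism f : n \<rightarrow> m\<close>
     (\<forall>n m f g. incr n m f \<longrightarrow> (\<forall>i<n. f i = g i) \<longrightarrow>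
        (\<forall>\<sigma>\<in>fld T n. mor T n m f \<sigma> = mor T n m g \<sigma>)) \<and>
     \<comment> \<open>functoriality\<close>
     (\<forall>n. \<forall>\<sigma>\<in>fld T n. mor T n n id \<sigma> = \<sigma>) \<and>
     (\<forall>n m k f g. incr n m f \<longrightarrow> incr m k g \<longrightarrow>
        (\<forall>\<sigma>\<in>fld T n. mor T n k (g \<circ> f) \<sigma> = mor T m k g (mor T n m f \<sigma>))) \<and>
     \<comment> \<open>supp_n : T_n \<rightarrow> [n]^{<omega}\<close>
     (\<forall>n. \<forall>\<sigma>\<in>fld T n. supp T n \<sigma> \<subseteq> {..<n}) \<and>
     \<comment> \<open>naturality of supp\<close>
     (\<forall>n m f. incr n m f \<longrightarrow> (\<forall>\<sigma>\<in>fld T n. supp T m (mor T n m f \<sigma>) = f ` supp T n \<sigma>)) \<and>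
     \<comment> \<open>support condition: sigma is in the range of T_{iota \<circ> en}\<close>
     (\<forall>n. \<forall>\<sigma>\<in>fld T n. \<exists>\<tau>\<in>fld T (card (supp T n \<sigma>)).
        mor T (card (supp T n \<sigma>)) n (en (<) (supp T n \<sigma>)) \<tau> = \<sigma>)"

definition DT :: "praedil \<Rightarrow> nat set \<Rightarrow> (nat set \<times> nat) set" where
  "DT T X = {(a, \<sigma>). a \<subseteq> X \<and> finite a \<and> \<sigma> \<in> fld T (card a) \<and> supp T (card a) \<sigma> = {..<card a}}"

definition DT_less :: "praedil \<Rightarrow> (nat \<Rightarrow> nat \<Rightarrow> bool) \<Rightarrow> nat set \<times> nat \<Rightarrow> nat set \<times> nat \<Rightarrow> bool" where
  "DT_less T lt \<rho> \<pi> = (case \<rho> of (a, \<sigma>) \<Rightarrow> case \<pi> of (b, \<tau>) \<Rightarrow>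
     tlt T (card (a \<union> b))
       (mor T (card a) (card (a \<union> b)) (collapse_incl lt a (a \<union> b)) \<sigma>)
       (mor T (card b) (card (a \<union> b)) (collapse_incl lt b (a \<union> b)) \<tau>))"

definition BH_collapse :: "praedil \<Rightarrow> nat set \<Rightarrow> (nat \<Rightarrow> nat \<Rightarrow> bool) \<Rightarrow> (nat set \<times> nat \<Rightarrow> nat) \<Rightarrow> bool" where
  "BH_collapse T X lt \<theta> \<longleftrightarrow>
     (\<forall>\<rho>\<in>DT T X. \<theta> \<rho> \<in> X) \<and>
     (\<forall>\<rho>\<in>DT T X. \<forall>\<pi>\<in>DT T X. DT_less T lt \<rho> \<pi> \<longrightarrow> (\<forall>s\<in>fst \<rho>. lt s (\<theta> \<pi>)) \<longrightarrow> lt (\<theta> \<rho>) (\<theta> \<pi>)) \<and>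
     (\<forall>\<rho>\<in>DT T X. \<forall>s\<in>fst \<rho>. lt s (\<theta> \<rho>))"

text \<open>Th sigma [s_0,...,s_{n-1}] stands for the term vartheta_sigma^{s_0,...,s_{n-1}}.\<close>
datatype trm = Th nat "trm list"

function th_less :: "praedil \<Rightarrow> trm \<Rightarrow> trm \<Rightarrow> bool" where
  "th_less T (Th \<sigma> ss) (Th \<tau> ts) =
    ((\<exists>f g.
        incr (length ss) (card (set ss \<union> set ts)) f \<and>
        incr (length ts) (card (set ss \<union> set ts)) g \<and>
        (\<forall>(i, x)\<in>set (zip [0..<length ss] ss). \<forall>(j, y)\<in>set (zip [0..<length ts] ts).
            (f i < g j \<longleftrightarrow> th_less T x y) \<and> (g j < f i \<longleftrightarrow> th_less T y x)) \<and>
        tlt T (card (set ss \<union> set ts))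
          (mor T (length ss) (card (set ss \<union> set ts)) f \<sigma>)
          (mor T (length ts) (card (set ss \<union> set ts)) g \<tau>) \<and>
        (if ss = [] then True else th_less T (last ss) (Th \<tau> ts)))
     \<or> (if ts = [] then False else (Th \<sigma> ss = last ts \<or> th_less T (Th \<sigma> ss) (last ts))))"
  by pat_completeness auto
lemma size_in_list_le: "x \<in> set xs \<Longrightarrow> size x \<le> size_list size xs" for x :: trm
  by (simp add: size_list_estimation')

termination
proof (relation "measure (\<lambda>(T, s, t). size s + size t)")
qed (auto dest!: set_zip_rightD size_in_list_le simp: le_imp_less_Suc intro!: le_imp_less_Suc size_in_list_le)

fun in_theta :: "praedil \<Rightarrow> trm \<Rightarrow> bool" where
  "in_theta T (Th \<sigma> ss) =
     ((\<forall>x\<in>set ss. in_theta T x) \<and> successively (th_less T) ss \<and>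
      \<sigma> \<in> fld T (length ss) \<and> supp T (length ss) \<sigma> = {..<length ss})"

end

theory Submission
  imports Defs
begin

context fixes X :: "'a set" and lt :: "'a \<Rightarrow> 'a \<Rightarrow> bool"
  assumes lin: "linord_on X lt"
begin

lemma irr: "x \<in> X \<Longrightarrow> \<not> lt x x" using lin unfolding linord_on_def by blast
lemma trns: "x \<in> X \<Longrightarrow> y \<in> X \<Longrightarrow> z \<in> X \<Longrightarrow> lt x y \<Longrightarrow> lt y z \<Longrightarrow> lt x z"
  using lin unfolding linord_on_def by blast
lemma tot: "x \<in> X \<Longrightarrow> y \<in> X \<Longrightarrow> x = y \<or> lt x y \<or> lt y x"
  using lin unfolding linord_on_def by blast
lemma asy: "x \<in> X \<Longrightarrow> y \<in> X \<Longrightarrow> lt x y \<Longrightarrow> \<not> lt y x" using irr trns by blast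

lemma rk_less_card: assumes "finite c" "c \<subseteq> X" "x \<in> c" shows "rk lt c x < card c"
proof -
  have "{y \<in> c. lt y x} \<subset> c" using assms irr by auto
  then show ?thesis unfolding rk_def using assms(1) by (simp add: psubset_card_mono)
qed

lemma rk_mono: assumes "finite c" "c \<subseteq> X" "x \<in> c" "y \<in> c" "lt x y"
  shows "rk lt c x < rk lt c y"
proof -
  have "{z \<in> c. lt z x} \<subset> {z \<in> c. lt z y}"
    using assms irr trns[of _ x y] by auto
  then show ?thesis unfolding rk_def using assms(1) by (simp add: psubset_card_mono)
qed

lemma rk_less_iff: assumes "finite c" "c \<subseteq> X" "x \<in> c" "y \<in> c"
  shows "rk lt c x < rk lt c y \<longleftrightarrow> lt x y"
  using assms rk_mono tot[of x y] by (metis less_asym less_irrefl subsetD)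

lemma rk_inj: assumes "finite c" "c \<subseteq> X" shows "inj_on (rk lt c) c"
  unfolding inj_on_def using assms rk_mono tot by (metis less_irrefl subsetD)

lemma rk_image: assumes "finite c" "c \<subseteq> X" shows "rk lt c ` c = {..<card c}"
proof (rule card_subset_eq)
  show "rk lt c ` c \<subseteq> {..<card c}" using rk_less_card assms by auto
  show "card (rk lt c ` c) = card {..<card c}" using rk_inj[OF assms] by (simp add: card_image)
qed simp

lemma en_eq: assumes "finite c" "c \<subseteq> X" "x \<in> c" "rk lt c x = i" shows "en lt c i = x"
  unfolding en_def
proof (rule the_equality)
  show "x \<in> c \<and> rk lt c x = i" using assms by simp
  fix y assume "y \<in> c \<and> rk lt c y = i"
  then show "y = x" using rk_inj[OF assms(1,2)] assms unfolding inj_on_def by metis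
qed

lemma en_props: assumes "finite c" "c \<subseteq> X" "i < card c"
  shows "en lt c i \<in> c" "rk lt c (en lt c i) = i"
proof -
  obtain x where "x \<in> c" "rk lt c x = i" using rk_image[OF assms(1,2)] assms(3) by (metis imageE lessThan_iff)
  then show "en lt c i \<in> c" "rk lt c (en lt c i) = i" using en_eq[OF assms(1,2)] by auto
qed

lemma en_image: assumes "finite c" "c \<subseteq> X" shows "en lt c ` {..<card c} = c"
proof
  show "en lt c ` {..<card c} \<subseteq> c" using en_props[OF assms] by auto
  show "c \<subseteq> en lt c ` {..<card c}"
  proof
    fix x assume "x \<in> c"
    then have "en lt c (rk lt c x) = x" "rk lt c x < card c"
      using en_eq[OF assms] rk_less_card[OF assms] by auto
    then show "x \<in> en lt c ` {..<card c}" by (metis image_eqI lessThan_iff)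
  qed
qed

lemma rk_unique: assumes "finite c" "c \<subseteq> X" "\<forall>x\<in>c. h x < card c"
  "\<forall>x\<in>c. \<forall>y\<in>c. lt x y \<longrightarrow> h x < h y" "x \<in> c"
shows "h x = rk lt c x"
proof -
  have hiff: "\<forall>x\<in>c. \<forall>y\<in>c. h x < h y \<longleftrightarrow> lt x y"
    using assms(2,4) tot by (metis less_asym less_irrefl subsetD)
  have inj: "inj_on h c" unfolding inj_on_def using assms(2,4) tot by (metis less_irrefl subsetD)
  have im: "h ` c = {..<card c}"
  proof (rule card_subset_eq)
    show "h ` c \<subseteq> {..<card c}" using assms(3) by auto
    show "card (h ` c) = card {..<card c}" using inj by (simp add: card_image)
  qed simp
  have eq: "{..<h x} = h ` {y\<in>c. lt y x}"
  proof
    show "{..<h x} \<subseteq> h ` {y\<in>c. lt y x}"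
    proof
      fix i assume i: "i \<in> {..<h x}"
      then have "i < card c" using assms(3,5) by auto
      then obtain y where "y \<in> c" "h y = i" using im by (metis imageE lessThan_iff)
      then show "i \<in> h ` {y\<in>c. lt y x}" using i hiff assms(5) by auto
    qed
    show "h ` {y\<in>c. lt y x} \<subseteq> {..<h x}" using hiff assms(5) by auto
  qed
  have "h x = card {..<h x}" by simp
  also have "\<dots> = card {y\<in>c. lt y x}" unfolding eq
    by (rule card_image) (rule inj_on_subset[OF inj], auto)
  finally show ?thesis unfolding rk_def .
qed

lemma ci_incr: assumes "finite c" "c \<subseteq> X" "a \<subseteq> c"
  shows "incr (card a) (card c) (collapse_incl lt a c)"
proof -
  have fa: "finite a" "a \<subseteq> X" using assms finite_subset by auto
  show ?thesis unfolding incr_def collapse_incl_def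
  proof (intro conjI allI impI)
    fix i assume "i < card a"
    then show "rk lt c (en lt a i) < card c" using en_props[OF fa] rk_less_card[OF assms(1,2)] assms(3) by blast
  next
    fix i j assume ij: "i < j" "j < card a"
    then have "lt (en lt a i) (en lt a j)"
      using en_props[OF fa] rk_less_iff[OF fa] by (metis order.strict_trans)
    then show "rk lt c (en lt a i) < rk lt c (en lt a j)"
      using rk_mono[OF assms(1,2)] en_props[OF fa] ij assms(3) by (meson order.strict_trans subsetD)
  qed
qed

lemma ci_image: assumes "finite c" "c \<subseteq> X" "a \<subseteq> c"
  shows "collapse_incl lt a c ` {..<card a} = rk lt c ` a"
proof -
  have fa: "finite a" "a \<subseteq> X" using assms finite_subset by auto
  have "collapse_incl lt a c ` {..<card a} = rk lt c ` (en lt a ` {..<card a})"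
    unfolding collapse_incl_def by auto
  then show ?thesis using en_image[OF fa] by simp
qed

lemma sorted_distinct: assumes "sorted_wrt lt ys" "set ys \<subseteq> X" shows "distinct ys"
  unfolding distinct_conv_nth
proof (intro allI impI)
  fix i j assume h: "i < length ys" "j < length ys" "i \<noteq> j"
  show "ys ! i \<noteq> ys ! j"
  proof (cases "i < j")
    case True then show ?thesis using sorted_wrt_nth_less[OF assms(1) True h(2)] irr assms(2) h
      by (metis nth_mem subsetD)
  next
    case False then have "j < i" using h by simp
    then show ?thesis using sorted_wrt_nth_less[OF assms(1) _ h(1)] irr assms(2) h
      by (metis nth_mem subsetD)
  qed
qed

lemma sorted_iff: assumes "sorted_wrt lt ys" "set ys \<subseteq> X" "i < length ys" "j < length ys"
  shows "lt (ys!i) (ys!j) \<longleftrightarrow> i < j"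
proof
  assume l: "lt (ys!i) (ys!j)"
  show "i < j"
  proof (rule ccontr)
    assume "\<not> i < j"
    then have "j = i \<or> j < i" by auto
    then show False
    proof
      assume "j = i" then show False using l irr assms by (metis nth_mem subsetD)
    next
      assume "j < i" then have "lt (ys!j) (ys!i)" using sorted_wrt_nth_less[OF assms(1) _ assms(3)] by simp
      then show False using l asy assms by (metis nth_mem subsetD)
    qed
  qed
next
  assume "i < j" then show "lt (ys!i) (ys!j)" using sorted_wrt_nth_less[OF assms(1) _ assms(4)] by simp
qed

lemma sorted_rk: assumes "sorted_wrt lt ys" "set ys \<subseteq> X" "i < length ys"
  shows "rk lt (set ys) (ys!i) = i"
proof -
  have d: "distinct ys" using sorted_distinct assms by blast
  have "{y \<in> set ys. lt y (ys!i)} = (!) ys ` {..<i}"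
  proof
    show "{y \<in> set ys. lt y (ys!i)} \<subseteq> (!) ys ` {..<i}"
    proof
      fix y assume "y \<in> {y \<in> set ys. lt y (ys!i)}"
      then obtain j where "j < length ys" "y = ys!j" "lt (ys!j) (ys!i)" by (auto simp: in_set_conv_nth)
      then show "y \<in> (!) ys ` {..<i}" using sorted_iff[OF assms(1,2)] assms(3) by auto
    qed
    show "(!) ys ` {..<i} \<subseteq> {y \<in> set ys. lt y (ys!i)}"
      using sorted_iff[OF assms(1,2)] assms(3) by auto
  qed
  moreover have "card ((!) ys ` {..<i}) = i"
    using inj_on_nth[OF d, of "{..<i}"] assms(3) by (simp add: card_image)
  ultimately show ?thesis unfolding rk_def by simp
qed

lemma sorted_en: assumes "sorted_wrt lt ys" "set ys \<subseteq> X" "i < length ys"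
  shows "en lt (set ys) i = ys!i"
  using en_eq[of "set ys" "ys!i" i] sorted_rk[OF assms] assms by auto

lemma succ_sorted: "set ys \<subseteq> X \<Longrightarrow> successively lt ys \<Longrightarrow> sorted_wrt lt ys"
proof (induction ys)
  case Nil then show ?case by simp
next
  case (Cons x xs)
  then have s: "sorted_wrt lt xs" by (cases xs) auto
  show ?case
  proof (cases xs)
    case Nil then show ?thesis by simp
  next
    case (Cons y ys')
    have "lt x y" using Cons.prems Cons by simp
    moreover have "\<forall>z\<in>set ys'. lt y z" using s Cons by simp
    ultimately have "\<forall>z\<in>set xs. lt x z" using Cons.prems Cons trns[of x y] by auto
    then show ?thesis using s by simp
  qed
qed

end

fun Fm :: "(nat set \<times> nat \<Rightarrow> nat) \<Rightarrow> trm \<Rightarrow> nat" where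
  "Fm th (Th \<sigma> ss) = th (set (map (Fm th) ss), \<sigma>)"

context fixes T :: praedil and X :: "nat set" and lt :: "nat \<Rightarrow> nat \<Rightarrow> bool"
    and \<theta> :: "nat set \<times> nat \<Rightarrow> nat"
  assumes pd: "prae_dilator T"
    and linX: "linord_on X lt"
    and bh: "BH_collapse T X lt \<theta>"
begin

lemma pd_parts1: "(\<forall>n. linord_on (fld T n) (tlt T n))"
  using pd unfolding prae_dilator_def by (elim conjE) assumption
lemma pd_parts2: "(\<forall>n m f. incr n m f \<longrightarrow>
        (\<forall>\<sigma>\<in>fld T n. mor T n m f \<sigma> \<in> fld T m) \<and>
        (\<forall>\<sigma>\<in>fld T n. \<forall>\<tau>\<in>fld T n. tlt T n \<sigma> \<tau> \<longrightarrow> tlt T m (mor T n m f \<sigma>) (mor T n m f \<tau>)))"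
  using pd unfolding prae_dilator_def by (elim conjE) assumption
lemma pd_parts3: "(\<forall>n m f g. incr n m f \<longrightarrow> (\<forall>i<n. f i = g i) \<longrightarrow>
        (\<forall>\<sigma>\<in>fld T n. mor T n m f \<sigma> = mor T n m g \<sigma>))"
  using pd unfolding prae_dilator_def by (elim conjE) assumption
lemma pd_parts4: "(\<forall>n m f. incr n m f \<longrightarrow> (\<forall>\<sigma>\<in>fld T n. supp T m (mor T n m f \<sigma>) = f ` supp T n \<sigma>))"
  using pd unfolding prae_dilator_def by (elim conjE) assumption
lemma pd_lin: "linord_on (fld T n) (tlt T n)" using pd_parts1 by blast
lemma pd_fld: "incr n m f \<Longrightarrow> \<sigma> \<in> fld T n \<Longrightarrow> mor T n m f \<sigma> \<in> fld T m"
  using pd_parts2 by blast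
lemma pd_mono: "incr n m f \<Longrightarrow> \<sigma> \<in> fld T n \<Longrightarrow> \<tau> \<in> fld T n \<Longrightarrow> tlt T n \<sigma> \<tau> \<Longrightarrow>
   tlt T m (mor T n m f \<sigma>) (mor T n m f \<tau>)"
  using pd_parts2 by blast
lemma pd_cong: "incr n m f \<Longrightarrow> \<forall>i<n. f i = g i \<Longrightarrow> \<sigma> \<in> fld T n \<Longrightarrow> mor T n m f \<sigma> = mor T n m g \<sigma>"
  using pd_parts3 by blast
lemma pd_supp: "incr n m f \<Longrightarrow> \<sigma> \<in> fld T n \<Longrightarrow> supp T m (mor T n m f \<sigma>) = f ` supp T n \<sigma>"
  using pd_parts4 by blast

lemma bhX: "\<rho> \<in> DT T X \<Longrightarrow> \<theta> \<rho> \<in> X" using bh unfolding BH_collapse_def by blast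
lemma bhA: "\<rho> \<in> DT T X \<Longrightarrow> \<pi> \<in> DT T X \<Longrightarrow> DT_less T lt \<rho> \<pi> \<Longrightarrow> (\<forall>s\<in>fst \<rho>. lt s (\<theta> \<pi>)) \<Longrightarrow> lt (\<theta> \<rho>) (\<theta> \<pi>)"
  using bh unfolding BH_collapse_def by blast
lemma bhB: "\<rho> \<in> DT T X \<Longrightarrow> s \<in> fst \<rho> \<Longrightarrow> lt s (\<theta> \<rho>)"
  using bh unfolding BH_collapse_def by blast

lemma DT_lin: assumes "\<rho> \<in> DT T X" "\<pi> \<in> DT T X"
  shows "DT_less T lt \<rho> \<pi> \<or> DT_less T lt \<pi> \<rho> \<or> \<rho> = \<pi>"
proof -
  obtain a \<sigma> where r: "\<rho> = (a, \<sigma>)" by force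
  obtain b \<tau> where p: "\<pi> = (b, \<tau>)" by force
  have A: "a \<subseteq> X" "finite a" "\<sigma> \<in> fld T (card a)" "supp T (card a) \<sigma> = {..<card a}"
    using assms(1) r unfolding DT_def by auto
  have B: "b \<subseteq> X" "finite b" "\<tau> \<in> fld T (card b)" "supp T (card b) \<tau> = {..<card b}"
    using assms(2) p unfolding DT_def by auto
  define c where "c = a \<union> b"
  have C: "finite c" "c \<subseteq> X" using A B c_def by auto
  define f where "f = collapse_incl lt a c"
  define g where "g = collapse_incl lt b c"
  have fi: "incr (card a) (card c) f" unfolding f_def using ci_incr[OF linX C] c_def by auto
  have gi: "incr (card b) (card c) g" unfolding g_def using ci_incr[OF linX C] c_def by auto
  define x1 where "x1 = mor T (card a) (card c) f \<sigma>"
  define x2 where "x2 = mor T (card b) (card c) g \<tau>"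
  have x1f: "x1 \<in> fld T (card c)" using pd_fld[OF fi A(3)] x1_def by simp
  have x2f: "x2 \<in> fld T (card c)" using pd_fld[OF gi B(3)] x2_def by simp
  have l1: "DT_less T lt \<rho> \<pi> = tlt T (card c) x1 x2"
    unfolding r p DT_less_def x1_def x2_def f_def g_def c_def by simp
  have l2: "DT_less T lt \<pi> \<rho> = tlt T (card c) x2 x1"
    unfolding r p DT_less_def x1_def x2_def f_def g_def c_def by (simp add: Un_commute)
  consider "x1 = x2" | "tlt T (card c) x1 x2" | "tlt T (card c) x2 x1"
    using tot[OF pd_lin x1f x2f] by blast
  then show ?thesis
  proof cases
    case 1
    have "supp T (card c) x1 = rk lt c ` a"
      unfolding x1_def using pd_supp[OF fi A(3)] A(4) ci_image[OF linX C, of a] c_def f_def by auto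
    moreover have "supp T (card c) x2 = rk lt c ` b"
      unfolding x2_def using pd_supp[OF gi B(3)] B(4) ci_image[OF linX C, of b] c_def g_def by auto
    ultimately have "rk lt c ` a = rk lt c ` b" using 1 by simp
    then have ab: "a = b" using inj_on_image_eq_iff[OF rk_inj[OF linX C]] c_def by blast
    have "\<sigma> = \<tau>"
    proof (rule ccontr)
      assume ne: "\<sigma> \<noteq> \<tau>"
      have t3: "\<tau> \<in> fld T (card a)" using B(3) ab by simp
      have "tlt T (card a) \<sigma> \<tau> \<or> tlt T (card a) \<tau> \<sigma>" using tot[OF pd_lin A(3) t3] ne by blast
      then have "tlt T (card c) x1 x2 \<or> tlt T (card c) x2 x1"
        using pd_mono[OF fi A(3) t3] pd_mono[OF fi t3 A(3)] unfolding x1_def x2_def f_def g_def ab by blast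
      then show False using 1 irr[OF pd_lin x1f] by simp
    qed
    then show ?thesis using ab r p by simp
  qed (use l1 l2 in auto)
qed

lemma BH_char: assumes "\<rho> \<in> DT T X" "\<pi> \<in> DT T X"
  shows "lt (\<theta> \<rho>) (\<theta> \<pi>) \<longleftrightarrow> (DT_less T lt \<rho> \<pi> \<and> (\<forall>x\<in>fst \<rho>. lt x (\<theta> \<pi>))) \<or>
     (\<exists>y\<in>fst \<pi>. \<theta> \<rho> = y \<or> lt (\<theta> \<rho>) y)"
proof -
  have sX: "fst \<rho> \<subseteq> X" "fst \<pi> \<subseteq> X" using assms unfolding DT_def by auto
  have tX: "\<theta> \<rho> \<in> X" "\<theta> \<pi> \<in> X" using bhX assms by auto
  show ?thesis
  proof
    assume l: "lt (\<theta> \<rho>) (\<theta> \<pi>)"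
    consider "DT_less T lt \<rho> \<pi>" | "DT_less T lt \<pi> \<rho>" | "\<rho> = \<pi>" using DT_lin[OF assms] by blast
    then show "(DT_less T lt \<rho> \<pi> \<and> (\<forall>x\<in>fst \<rho>. lt x (\<theta> \<pi>))) \<or> (\<exists>y\<in>fst \<pi>. \<theta> \<rho> = y \<or> lt (\<theta> \<rho>) y)"
    proof cases
      case 1
      have "\<forall>x\<in>fst \<rho>. lt x (\<theta> \<pi>)"
        using bhB[OF assms(1)] l trns[OF linX _ tX] sX by blast
      then show ?thesis using 1 by blast
    next
      case 2
      have "\<not> (\<forall>y\<in>fst \<pi>. lt y (\<theta> \<rho>))"
        using bhA[OF assms(2,1) 2] l asy[OF linX tX] by blast
      then obtain y where "y \<in> fst \<pi>" "\<not> lt y (\<theta> \<rho>)" by blast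
      then show ?thesis using tot[OF linX, of y "\<theta> \<rho>"] sX tX by blast
    next
      case 3 then show ?thesis using l irr[OF linX tX(1)] by simp
    qed
  next
    assume "(DT_less T lt \<rho> \<pi> \<and> (\<forall>x\<in>fst \<rho>. lt x (\<theta> \<pi>))) \<or> (\<exists>y\<in>fst \<pi>. \<theta> \<rho> = y \<or> lt (\<theta> \<rho>) y)"
    then show "lt (\<theta> \<rho>) (\<theta> \<pi>)"
    proof
      assume "DT_less T lt \<rho> \<pi> \<and> (\<forall>x\<in>fst \<rho>. lt x (\<theta> \<pi>))"
      then show ?thesis using bhA[OF assms] by blast
    next
      assume "\<exists>y\<in>fst \<pi>. \<theta> \<rho> = y \<or> lt (\<theta> \<rho>) y"
      then obtain y where y: "y \<in> fst \<pi>" "\<theta> \<rho> = y \<or> lt (\<theta> \<rho>) y" by blast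
      have "lt y (\<theta> \<pi>)" using bhB[OF assms(2) y(1)] .
      then show ?thesis using y trns[OF linX tX(1) _ tX(2)] sX by blast
    qed
  qed
qed

lemma BH_inj: assumes "\<rho> \<in> DT T X" "\<pi> \<in> DT T X" "\<theta> \<rho> = \<theta> \<pi>" shows "\<rho> = \<pi>"
proof -
  have tX: "\<theta> \<rho> \<in> X" using bhX assms by auto
  have "\<not> DT_less T lt \<rho> \<pi>"
    using bhA[OF assms(1,2)] bhB[OF assms(1)] assms(3) irr[OF linX tX] by metis
  moreover have "\<not> DT_less T lt \<pi> \<rho>"
    using bhA[OF assms(2,1)] bhB[OF assms(2)] assms(3) irr[OF linX tX] by metis
  ultimately show ?thesis using DT_lin[OF assms(1,2)] by blast
qed

end

definition good :: "praedil \<Rightarrow> nat set \<Rightarrow> (nat \<Rightarrow> nat \<Rightarrow> bool) \<Rightarrow> (nat set \<times> nat \<Rightarrow> nat) \<Rightarrow> trm \<Rightarrow> trm \<Rightarrow> bool" where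
  "good T X lt \<theta> s t \<longleftrightarrow> (in_theta T s \<longrightarrow> in_theta T t \<longrightarrow> Fm \<theta> s \<in> X \<and> Fm \<theta> t \<in> X \<and>
     (th_less T s t \<longleftrightarrow> lt (Fm \<theta> s) (Fm \<theta> t)) \<and> (Fm \<theta> s = Fm \<theta> t \<longrightarrow> s = t))"

lemma zip_all: "(\<forall>(i,x)\<in>set (zip [0..<length xs] xs). Q i x) \<longleftrightarrow> (\<forall>i<length xs. Q i (xs!i))"
  apply (auto simp: set_zip)
  by (metis add_0 diff_zero length_upt nth_upt)

context fixes T :: praedil and X :: "nat set" and lt :: "nat \<Rightarrow> nat \<Rightarrow> bool"
    and \<theta> :: "nat set \<times> nat \<Rightarrow> nat"
  assumes pd: "prae_dilator T"
    and linX: "linord_on X lt"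
    and bh: "BH_collapse T X lt \<theta>"
begin

lemma list_side: assumes "\<forall>x\<in>set ss. \<forall>y\<in>set ss. good T X lt \<theta> x y" "in_theta T (Th \<sigma> ss)"
  shows "sorted_wrt lt (map (Fm \<theta>) ss)" "set (map (Fm \<theta>) ss) \<subseteq> X"
    "card (set (map (Fm \<theta>) ss)) = length ss" "(set (map (Fm \<theta>) ss), \<sigma>) \<in> DT T X"
    "Fm \<theta> (Th \<sigma> ss) \<in> X"
proof -
  let ?F = "Fm \<theta>"
  have it: "\<forall>x\<in>set ss. in_theta T x" "successively (th_less T) ss" "\<sigma> \<in> fld T (length ss)"
    "supp T (length ss) \<sigma> = {..<length ss}" using assms(2) by auto
  have G: "\<forall>x\<in>set ss. \<forall>y\<in>set ss. ?F x \<in> X \<and> (th_less T x y \<longleftrightarrow> lt (?F x) (?F y))"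
    using assms(1) it(1) unfolding good_def by blast
  show X: "set (map ?F ss) \<subseteq> X" using G by auto
  have "successively lt (map ?F ss)" unfolding successively_map
    by (rule successively_mono[OF it(2)]) (use G in blast)
  then show S: "sorted_wrt lt (map ?F ss)" using succ_sorted[OF linX X] by blast
  have "distinct (map ?F ss)" using sorted_distinct[OF linX S X] .
  then show C: "card (set (map ?F ss)) = length ss" using distinct_card by fastforce
  show D: "(set (map ?F ss), \<sigma>) \<in> DT T X" unfolding DT_def using X C it by auto
  show "?F (Th \<sigma> ss) \<in> X" using bhX[OF pd linX bh D] by simp
qed

end

context fixes T :: praedil and X :: "nat set" and lt :: "nat \<Rightarrow> nat \<Rightarrow> bool"
    and \<theta> :: "nat set \<times> nat \<Rightarrow> nat"
  assumes pd: "prae_dilator T"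
    and linX: "linord_on X lt"
    and bh: "BH_collapse T X lt \<theta>"
begin

lemma step: assumes s: "s = Th \<sigma> ss" and t: "t = Th \<tau> ts"
  and its: "in_theta T s" and itt: "in_theta T t"
  and IH1: "\<forall>x\<in>set ss \<union> set ts. \<forall>y\<in>set ss \<union> set ts. good T X lt \<theta> x y"
  and IH2: "\<forall>x\<in>set ss. good T X lt \<theta> x t" and IH3: "\<forall>y\<in>set ts. good T X lt \<theta> s y"
shows "good T X lt \<theta> s t"
proof -
  let ?F = "Fm \<theta>"
  define A where "A = set (map ?F ss)"
  define B where "B = set (map ?F ts)"
  define n where "n = length ss"
  define m where "m = length ts"
  have itc: "\<forall>x\<in>set ss. in_theta T x" "\<forall>x\<in>set ts. in_theta T x" using its itt s t by auto
  have LA: "sorted_wrt lt (map ?F ss)" "A \<subseteq> X" "card A = n" "(A, \<sigma>) \<in> DT T X"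
    using list_side[OF pd linX bh, of ss \<sigma>] IH1 its s unfolding A_def n_def by auto
  have LB: "sorted_wrt lt (map ?F ts)" "B \<subseteq> X" "card B = m" "(B, \<tau>) \<in> DT T X"
    using list_side[OF pd linX bh, of ts \<tau>] IH1 itt t unfolding B_def m_def by auto
  have Fs: "?F s = \<theta> (A, \<sigma>)" using s A_def by simp
  have Ft: "?F t = \<theta> (B, \<tau>)" using t B_def by simp
  have FsX: "?F s \<in> X" "?F t \<in> X" using Fs Ft bhX[OF pd linX bh] LA(4) LB(4) by auto
  have G: "\<forall>x\<in>set ss \<union> set ts. \<forall>y\<in>set ss \<union> set ts. ?F x \<in> X \<and>
      (th_less T x y \<longleftrightarrow> lt (?F x) (?F y)) \<and> (?F x = ?F y \<longrightarrow> x = y)"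
    using IH1 itc unfolding good_def by blast
  have G2: "\<forall>x\<in>set ss. (th_less T x t \<longleftrightarrow> lt (?F x) (?F t)) \<and> (?F x = ?F t \<longrightarrow> x = t)"
    using IH2 itc itt unfolding good_def by blast
  have G3: "\<forall>y\<in>set ts. (th_less T s y \<longleftrightarrow> lt (?F s) (?F y)) \<and> (?F s = ?F y \<longrightarrow> s = y)"
    using IH3 itc its unfolding good_def by blast
  have ssU: "\<forall>i<n. ss!i \<in> set ss" "\<forall>j<m. ts!j \<in> set ts" using n_def m_def by auto
  have ssX: "\<forall>i<n. ?F (ss!i) \<in> X" using G ssU by blast
  have tsX: "\<forall>j<m. ?F (ts!j) \<in> X" using G ssU by blast
  have sA: "\<forall>i<n. \<forall>i'<n. lt (?F (ss!i)) (?F (ss!i')) \<longleftrightarrow> i < i'"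
    using sorted_iff[OF linX LA(1)] LA(2) A_def n_def by auto
  have sB: "\<forall>j<m. \<forall>j'<m. lt (?F (ts!j)) (?F (ts!j')) \<longleftrightarrow> j < j'"
    using sorted_iff[OF linX LB(1)] LB(2) B_def m_def by auto
  have rkA: "\<forall>i<n. rk lt A (?F (ss!i)) = i"
    using sorted_rk[OF linX LA(1)] LA(2) A_def n_def by auto
  have rkB: "\<forall>j<m. rk lt B (?F (ts!j)) = j"
    using sorted_rk[OF linX LB(1)] LB(2) B_def m_def by auto
  have enA: "\<forall>i<n. en lt A i = ?F (ss!i)"
    using sorted_en[OF linX LA(1)] LA(2) A_def n_def by auto
  have enB: "\<forall>j<m. en lt B j = ?F (ts!j)"
    using sorted_en[OF linX LB(1)] LB(2) B_def m_def by auto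
  have memA: "\<And>x. x \<in> A \<Longrightarrow> \<exists>i<n. x = ?F (ss!i)" unfolding A_def n_def
    by (auto simp: in_set_conv_nth)
  have memB: "\<And>x. x \<in> B \<Longrightarrow> \<exists>j<m. x = ?F (ts!j)" unfolding B_def m_def
    by (auto simp: in_set_conv_nth)
  have inA: "\<forall>i<n. ?F (ss!i) \<in> A" unfolding A_def n_def by auto
  have inB: "\<forall>j<m. ?F (ts!j) \<in> B" unfolding B_def m_def by auto

  have ii_iff: "(if ts = [] then False else (s = last ts \<or> th_less T s (last ts))) \<longleftrightarrow>
     (\<exists>y\<in>B. \<theta> (A, \<sigma>) = y \<or> lt (\<theta> (A, \<sigma>)) y)"
  proof
    assume h: "if ts = [] then False else (s = last ts \<or> th_less T s (last ts))"
    then have ne: "ts \<noteq> []" by auto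
    then have l: "last ts \<in> set ts" by simp
    then have "?F (last ts) \<in> B" unfolding B_def by simp
    moreover have "?F s = ?F (last ts) \<or> lt (?F s) (?F (last ts))" using h ne G3 l by auto
    ultimately show "\<exists>y\<in>B. \<theta> (A, \<sigma>) = y \<or> lt (\<theta> (A, \<sigma>)) y" using Fs by auto
  next
    assume "\<exists>y\<in>B. \<theta> (A, \<sigma>) = y \<or> lt (\<theta> (A, \<sigma>)) y"
    then obtain y where y: "y \<in> B" "\<theta> (A, \<sigma>) = y \<or> lt (\<theta> (A, \<sigma>)) y" by blast
    obtain j where j0: "j < m" "y = ?F (ts!j)" using memB[OF y(1)] by blast
    have j: "j < m" "?F s = ?F (ts!j) \<or> lt (?F s) (?F (ts!j))" using j0 y(2) Fs by auto
    then have ne: "ts \<noteq> []" using m_def by auto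
    have la: "last ts = ts!(m-1)" using ne m_def by (simp add: last_conv_nth)
    have l: "last ts \<in> set ts" using ne by simp
    have "?F (ts!j) = ?F (last ts) \<or> lt (?F (ts!j)) (?F (last ts))"
    proof (cases "j = m - 1")
      case True then show ?thesis using la by simp
    next
      case False then have "j < m - 1" using j by simp
      then show ?thesis using sB j la by auto
    qed
    then have "?F s = ?F (last ts) \<or> lt (?F s) (?F (last ts))"
      using j trns[OF linX, of "?F s" "?F (ts!j)" "?F (last ts)"] FsX tsX G l by auto
    then have "s = last ts \<or> th_less T s (last ts)" using G3 l by blast
    then show "if ts = [] then False else (s = last ts \<or> th_less T s (last ts))" using ne by simp
  qed

  have c5_iff: "(if ss = [] then True else th_less T (last ss) t) \<longleftrightarrow> (\<forall>x\<in>A. lt x (\<theta> (B, \<tau>)))"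
  proof (cases "ss = []")
    case True then show ?thesis using A_def by simp
  next
    case ne: False
    have la: "last ss = ss!(n-1)" using ne n_def by (simp add: last_conv_nth)
    have l: "last ss \<in> set ss" using ne by simp
    have n0: "n - 1 < n" using ne n_def by simp
    show ?thesis
    proof
      assume "if ss = [] then True else th_less T (last ss) t"
      then have lt1: "lt (?F (last ss)) (\<theta> (B, \<tau>))" using ne G2 l Ft by auto
      show "\<forall>x\<in>A. lt x (\<theta> (B, \<tau>))"
      proof
        fix x assume "x \<in> A"
        then obtain i where i: "i < n" "x = ?F (ss!i)" using memA by blast
        show "lt x (\<theta> (B, \<tau>))"
        proof (cases "i = n - 1")
          case True then show ?thesis using i la lt1 by simp
        next
          case False then have "i < n - 1" using i by simp
          then have "lt x (?F (last ss))" using sA i la n0 by auto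
          then show ?thesis using lt1 trns[OF linX] ssX i la n0 FsX Ft by metis
        qed
      qed
    next
      assume "\<forall>x\<in>A. lt x (\<theta> (B, \<tau>))"
      then have "lt (?F (last ss)) (?F t)" using l A_def Ft by auto
      then show "if ss = [] then True else th_less T (last ss) t" using G2 l ne by auto
    qed
  qed

  define U where "U = set ss \<union> set ts"
  define c where "c = A \<union> B"
  have cU: "c = ?F ` U" unfolding c_def U_def A_def B_def by auto
  have injU: "inj_on ?F U" unfolding inj_on_def U_def using G by blast
  have kc: "card U = card c" using cU injU by (simp add: card_image)
  have cf: "finite c" "c \<subseteq> X" using LA LB c_def A_def B_def by auto
  define f0 where "f0 = collapse_incl lt A c"
  define g0 where "g0 = collapse_incl lt B c"
  have f0i: "incr n (card U) f0" using ci_incr[OF linX cf, of A] LA(3) kc c_def f0_def by auto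
  have g0i: "incr m (card U) g0" using ci_incr[OF linX cf, of B] LB(3) kc c_def g0_def by auto
  have f0v: "\<forall>i<n. f0 i = rk lt c (?F (ss!i))" using enA unfolding f0_def collapse_incl_def by auto
  have g0v: "\<forall>j<m. g0 j = rk lt c (?F (ts!j))" using enB unfolding g0_def collapse_incl_def by auto
  have cA: "\<forall>i<n. ?F (ss!i) \<in> c" "\<forall>j<m. ?F (ts!j) \<in> c" using inA inB c_def by auto
  have crossU: "\<forall>i<n. \<forall>j<m. (th_less T (ss!i) (ts!j) \<longleftrightarrow> lt (?F (ss!i)) (?F (ts!j))) \<and>
       (th_less T (ts!j) (ss!i) \<longleftrightarrow> lt (?F (ts!j)) (?F (ss!i)))"
    using G ssU by blast
  have DTl: "DT_less T lt (A, \<sigma>) (B, \<tau>) \<longleftrightarrow>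
      tlt T (card U) (mor T n (card U) f0 \<sigma>) (mor T m (card U) g0 \<tau>)"
    unfolding DT_less_def f0_def g0_def using LA(3) LB(3) kc c_def by simp

  let ?EX = "\<exists>f g. incr (length ss) (card (set ss \<union> set ts)) f \<and>
        incr (length ts) (card (set ss \<union> set ts)) g \<and>
        (\<forall>(i, x)\<in>set (zip [0..<length ss] ss). \<forall>(j, y)\<in>set (zip [0..<length ts] ts).
            (f i < g j \<longleftrightarrow> th_less T x y) \<and> (g j < f i \<longleftrightarrow> th_less T y x)) \<and>
        tlt T (card (set ss \<union> set ts))
          (mor T (length ss) (card (set ss \<union> set ts)) f \<sigma>)
          (mor T (length ts) (card (set ss \<union> set ts)) g \<tau>)"
  have EX_iff: "?EX \<longleftrightarrow> DT_less T lt (A, \<sigma>) (B, \<tau>)"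
  proof
    assume "?EX"
    then obtain f g where fi: "incr n (card U) f" and gi: "incr m (card U) g"
      and cond: "\<forall>i<n. \<forall>j<m. (f i < g j \<longleftrightarrow> th_less T (ss!i) (ts!j)) \<and> (g j < f i \<longleftrightarrow> th_less T (ts!j) (ss!i))"
      and tl: "tlt T (card U) (mor T n (card U) f \<sigma>) (mor T m (card U) g \<tau>)"
      unfolding zip_all n_def m_def U_def by blast
    define h where "h x = (if x \<in> A then f (rk lt A x) else g (rk lt B x))" for x
    have hA: "\<forall>i<n. h (?F (ss!i)) = f i" using inA rkA h_def by auto
    have hB: "\<forall>j<m. h (?F (ts!j)) = g j"
    proof (intro allI impI)
      fix j assume j: "j < m"
      show "h (?F (ts!j)) = g j"
      proof (cases "?F (ts!j) \<in> A")
        case True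
        then obtain i where i: "i < n" "?F (ts!j) = ?F (ss!i)" using memA by blast
        have "\<not> lt (?F (ss!i)) (?F (ts!j))" "\<not> lt (?F (ts!j)) (?F (ss!i))"
          using i irr[OF linX] tsX j by auto
        then have "f i = g j" using cond crossU i j by (meson linorder_neqE_nat)
        then show ?thesis using hA i by metis
      next
        case False then show ?thesis using h_def rkB j by simp
      qed
    qed
    have hrange: "\<forall>x\<in>c. h x < card c"
    proof
      fix x assume "x \<in> c"
      then have "(\<exists>i<n. x = ?F (ss!i)) \<or> (\<exists>j<m. x = ?F (ts!j))" using memA memB c_def by blast
      then show "h x < card c" using hA hB fi gi kc unfolding incr_def by auto
    qed
    have hmono: "\<forall>x\<in>c. \<forall>y\<in>c. lt x y \<longrightarrow> h x < h y"
    proof (intro ballI impI)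
      fix x y assume xy: "x \<in> c" "y \<in> c" "lt x y"
      have x: "(\<exists>i<n. x = ?F (ss!i)) \<or> (\<exists>j<m. x = ?F (ts!j))" using xy memA memB c_def by blast
      have y: "(\<exists>i<n. y = ?F (ss!i)) \<or> (\<exists>j<m. y = ?F (ts!j))" using xy memA memB c_def by blast
      show "h x < h y"
      proof -
        { fix i i' assume "i < n" "i' < n" "x = ?F (ss!i)" "y = ?F (ss!i')"
          then have ?thesis using sA xy hA fi unfolding incr_def by auto }
        moreover
        { fix j j' assume "j < m" "j' < m" "x = ?F (ts!j)" "y = ?F (ts!j')"
          then have ?thesis using sB xy hB gi unfolding incr_def by auto }
        moreover
        { fix i j assume "i < n" "j < m" "x = ?F (ss!i)" "y = ?F (ts!j)"
          then have ?thesis using crossU cond xy hA hB by auto }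
        moreover
        { fix i j assume "i < n" "j < m" "x = ?F (ts!j)" "y = ?F (ss!i)"
          then have ?thesis using crossU cond xy hA hB by auto }
        ultimately show ?thesis using x y by blast
      qed
    qed
    have hrk: "\<forall>x\<in>c. h x = rk lt c x" using rk_unique[OF linX cf hrange hmono] by blast
    have "\<forall>i<n. f i = f0 i" using hrk hA f0v cA by auto
    then have e1: "mor T n (card U) f \<sigma> = mor T n (card U) f0 \<sigma>"
      using pd_cong[OF pd linX bh fi] LA(4) LA(3) unfolding DT_def by auto
    have "\<forall>j<m. g j = g0 j" using hrk hB g0v cA by auto
    then have e2: "mor T m (card U) g \<tau> = mor T m (card U) g0 \<tau>"
      using pd_cong[OF pd linX bh gi] LB(4) LB(3) unfolding DT_def by auto
    show "DT_less T lt (A, \<sigma>) (B, \<tau>)" using DTl tl e1 e2 by simp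
  next
    assume d: "DT_less T lt (A, \<sigma>) (B, \<tau>)"
    have cond: "\<forall>i<n. \<forall>j<m. (f0 i < g0 j \<longleftrightarrow> th_less T (ss!i) (ts!j)) \<and> (g0 j < f0 i \<longleftrightarrow> th_less T (ts!j) (ss!i))"
      using crossU f0v g0v cA rk_less_iff[OF linX cf] by auto
    show "?EX"
      apply (rule exI[of _ f0], rule exI[of _ g0])
      unfolding zip_all using f0i g0i cond d DTl unfolding n_def m_def U_def by blast
  qed

  have main_iff: "th_less T s t \<longleftrightarrow> lt (?F s) (?F t)"
  proof -
    have "th_less T s t \<longleftrightarrow> (?EX \<and> (if ss = [] then True else th_less T (last ss) t)) \<or>
        (if ts = [] then False else (s = last ts \<or> th_less T s (last ts)))"
      unfolding s t th_less.simps by blast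
    also have "\<dots> \<longleftrightarrow> (DT_less T lt (A, \<sigma>) (B, \<tau>) \<and> (\<forall>x\<in>A. lt x (\<theta> (B, \<tau>)))) \<or>
        (\<exists>y\<in>B. \<theta> (A, \<sigma>) = y \<or> lt (\<theta> (A, \<sigma>)) y)"
      using EX_iff c5_iff ii_iff by blast
    also have "\<dots> \<longleftrightarrow> lt (\<theta> (A, \<sigma>)) (\<theta> (B, \<tau>))"
      using BH_char[OF pd linX bh LA(4) LB(4)] by simp
    finally show ?thesis using Fs Ft by simp
  qed

  have inj: "?F s = ?F t \<longrightarrow> s = t"
  proof
    assume "?F s = ?F t"
    then have "(A, \<sigma>) = (B, \<tau>)" using BH_inj[OF pd linX bh LA(4) LB(4)] Fs Ft by simp
    then have AB: "A = B" "\<sigma> = \<tau>" by auto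
    then have nm: "n = m" using LA(3) LB(3) by simp
    have "\<forall>i<n. ss!i = ts!i"
    proof (intro allI impI)
      fix i assume i: "i < n"
      have "?F (ss!i) = ?F (ts!i)" using enA enB AB nm i by metis
      then show "ss!i = ts!i" using G ssU i nm by blast
    qed
    then have "ss = ts" using nm n_def m_def by (simp add: nth_equalityI)
    then show "s = t" using s t AB by simp
  qed
  show ?thesis unfolding good_def using FsX main_iff inj by blast
qed

end

context fixes T :: praedil and X :: "nat set" and lt :: "nat \<Rightarrow> nat \<Rightarrow> bool"
    and \<theta> :: "nat set \<times> nat \<Rightarrow> nat"
  assumes pd: "prae_dilator T"
    and linX: "linord_on X lt"
    and bh: "BH_collapse T X lt \<theta>"
begin

lemma size_child: "x \<in> set ss \<Longrightarrow> size x < size (Th \<sigma> ss)"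
  using size_in_list_le[of x ss] by simp

lemma all_good: "good T X lt \<theta> (fst p) (snd p)"
proof (induction p rule: wf_induct[OF wf_measures[of "[\<lambda>p. max (size (fst p)) (size (snd p)), \<lambda>p. size (fst p) + size (snd p)]"]])
  case (1 p)
  obtain s t where p: "p = (s, t)" by force
  obtain \<sigma> ss where s: "s = Th \<sigma> ss" by (cases s) auto
  obtain \<tau> ts where t: "t = Th \<tau> ts" by (cases t) auto
  have IH: "\<And>x y. max (size x) (size y) < max (size s) (size t) \<or>
     (max (size x) (size y) = max (size s) (size t) \<and> size x + size y < size s + size t) \<Longrightarrow> good T X lt \<theta> x y"
    using 1 p by fastforce
  have cs: "\<forall>x\<in>set ss. size x < size s" using size_child s by blast
  have ct: "\<forall>x\<in>set ts. size x < size t" using size_child t by blast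
  show ?case
  proof (cases "in_theta T s \<and> in_theta T t")
    case True
    have IH1: "\<forall>x\<in>set ss \<union> set ts. \<forall>y\<in>set ss \<union> set ts. good T X lt \<theta> x y"
    proof (intro ballI)
      fix x y assume "x \<in> set ss \<union> set ts" "y \<in> set ss \<union> set ts"
      then have "size x < max (size s) (size t)" "size y < max (size s) (size t)" using cs ct by auto
      then show "good T X lt \<theta> x y" using IH by simp
    qed
    have IH2: "\<forall>x\<in>set ss. good T X lt \<theta> x t"
    proof
      fix x assume "x \<in> set ss"
      then have "size x < size s" using cs by auto
      then have "max (size x) (size t) \<le> max (size s) (size t)" "size x + size t < size s + size t" by auto
      then show "good T X lt \<theta> x t" using IH[of x t] le_neq_implies_less by blast
    qed
    have IH3: "\<forall>y\<in>set ts. good T X lt \<theta> s y"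
    proof
      fix y assume "y \<in> set ts"
      then have "size y < size t" using ct by auto
      then have "max (size s) (size y) \<le> max (size s) (size t)" "size s + size y < size s + size t" by auto
      then show "good T X lt \<theta> s y" using IH[of s y] le_neq_implies_less by blast
    qed
    show ?thesis using step[OF pd linX bh s t _ _ IH1 IH2 IH3] True p by simp
  next
    case False then show ?thesis using p unfolding good_def by auto
  qed
qed

end

theorem theorem4p5:
  fixes T :: praedil and X :: "nat set" and lt :: "nat \<Rightarrow> nat \<Rightarrow> bool"
    and \<theta> :: "nat set \<times> nat \<Rightarrow> nat"
  assumes "prae_dilator T"
    and "linord_on X lt"
    and "BH_collapse T X lt \<theta>"
  shows "\<exists>f :: trm \<Rightarrow> nat.
           (\<forall>s. in_theta T s \<longrightarrow> f s \<in> X) \<and>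
           (\<forall>s t. in_theta T s \<longrightarrow> in_theta T t \<longrightarrow> (th_less T s t \<longleftrightarrow> lt (f s) (f t)))"
proof (intro exI[of _ "Fm \<theta>"] conjI allI impI)
  fix s assume "in_theta T s"
  then show "Fm \<theta> s \<in> X" using all_good[OF assms, of "(s, s)"] unfolding good_def by simp
next
  fix s t assume "in_theta T s" "in_theta T t"
  then show "th_less T s t \<longleftrightarrow> lt (Fm \<theta> s) (Fm \<theta> t)"
    using all_good[OF assms, of "(s, t)"] unfolding good_def by simp
qed

end
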